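(* Let $d>1$ be a square-free positive integer and let $M=\mathbb{Q}(i\sqrt{d})$, where $i=\sqrt{-1}$. Let $n\geq 1$, let $\alpha_1,\ldots,\alpha_n$ be distinct non-zero real numbers, and let $\lambda_j=\lambda_{j1}+i\lambda_{j2}$ with $\lambda_{j1},\lambda_{j2}\in\mathbb{R}$ for $1\leq j\leq n$. Let $c_0>0$. Let $X,Y\in\mathbb{Z}_M$ satisfy \[ \left|\prod_{j=1}^n(X-\alpha_j Y+\lambda_j)\right|\leq c_0 . \] (a) If $d\equiv 3 \pmod 4$, write $X=x_1+x_2\frac{1+i\sqrt{d}}{2}$, $Y=y_1+y_2\frac{1+i\sqrt{d}}{2}$ with $x_1,x_2,y_1,y_2\in\mathbb{Z}$. Then \[ \left|\prod_{j=1}^n\bigl((2x_1+x_2)-\alpha_j (2y_1+y_2)+2\lambda_{j1}\bigr)\right|\leq 2^n c_0 \quad\text{and}\quad \left|\prod_{j=1}^n\Bigl(x_2-\alpha_j y_2+\frac{2}{\sqrt{d}}\lambda_{j2}\Bigr)\right|\leq \frac{2^n c_0}{\sqrt{d}^{\,n}}. \] (b) If $d\equiv 1,2 \pmod 4$, write $X=x_1+x_2 i\sqrt{d}$, $Y=y_1+y_2 i\sqrt{d}$ with $x_1,x_2,y_1,y_2\in\mathbb{Z}$. Then \[ \left|\prod_{j=1}^n(x_1-\alpha_j y_1+\lambda_{j1})\right|\leq c_0 \quad\text{and}\quad \left|\prod_{j=1}^n\Bigl(x_2-\alpha_j y_2+\frac{1}{\sqrt{d}}\lambda_{j2}\Bigr)\right|\leq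 \frac{c_0}{\sqrt{d}^{\,n}}. \]
   Context: $\mathbb{Z}_M$ denotes the ring of integers of the number field $M$, viewed as a subset of $\mathbb{C}$ via $i\sqrt{d}\in\mathbb{C}$. For $d\equiv 3\pmod 4$ an integral basis of $\mathbb{Z}_M$ is $\{1,\frac{1+i\sqrt{d}}{2}\}$, and for $d\equiv 1,2\pmod 4$ it is $\{1,i\sqrt{d}\}$, so the integers $x_1,x_2,y_1,y_2$ are uniquely determined. *)

theory Defs
  imports Complex_Main "HOL-Computational_Algebra.Squarefree"
begin

text \<open>The second element of the integral basis of the ring of integers of
  M = Q(i sqrt d), for square-free d > 1, embedded in C via i sqrt d.\<close>
definition omegaM :: "nat \<Rightarrow> complex" where
  "omegaM d = (if d mod 4 = 3
               then (1 + \<i> * complex_of_real (sqrt (real d))) / 2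
               else \<i> * complex_of_real (sqrt (real d)))"

definition ZM :: "nat \<Rightarrow> complex set" where
  "ZM d = {of_int a + of_int b * omegaM d | a b :: int. True}"

end

theory Submission
  imports Defs
begin

lemma prod_bound_aux:
  fixes f :: "nat \<Rightarrow> real" and z :: "nat \<Rightarrow> complex"
  assumes "\<And>j. j \<in> A \<Longrightarrow> \<bar>f j\<bar> \<le> k * norm (z j)" and "k \<ge> 0"
  shows "\<bar>\<Prod>j\<in>A. f j\<bar> \<le> k ^ card A * norm (\<Prod>j\<in>A. z j)"
proof -
  have "\<bar>\<Prod>j\<in>A. f j\<bar> = (\<Prod>j\<in>A. \<bar>f j\<bar>)" by (simp add: abs_prod)
  also have "\<dots> \<le> (\<Prod>j\<in>A. k * norm (z j))"
    by (rule prod_mono) (use assms in auto)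
  also have "\<dots> = k ^ card A * norm (\<Prod>j\<in>A. z j)"
    by (simp add: prod.distrib prod_norm)
  finally show ?thesis .
qed

theorem theorem4:
  fixes d n :: nat and alpha :: "nat \<Rightarrow> real" and lam :: "nat \<Rightarrow> complex"
    and c0 :: real and X Y :: complex
  assumes "d > 1" and "squarefree d"
    and "n \<ge> 1"
    and "inj_on alpha {1..n}" and "\<forall>j\<in>{1..n}. alpha j \<noteq> 0"
    and "c0 > 0"
    and "X \<in> ZM d" and "Y \<in> ZM d"
    and "norm (\<Prod>j=1..n. X - of_real (alpha j) * Y + lam j) \<le> c0"
  shows
    "(d mod 4 = 3 \<longrightarrow>
       (\<forall>x1 x2 y1 y2 :: int.
          X = of_int x1 + of_int x2 * ((1 + \<i> * complex_of_real (sqrt (real d))) / 2) \<and>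
          Y = of_int y1 + of_int y2 * ((1 + \<i> * complex_of_real (sqrt (real d))) / 2) \<longrightarrow>
          \<bar>\<Prod>j=1..n. real_of_int (2*x1 + x2) - alpha j * real_of_int (2*y1 + y2) + 2 * Re (lam j)\<bar>
             \<le> 2 ^ n * c0 \<and>
          \<bar>\<Prod>j=1..n. real_of_int x2 - alpha j * real_of_int y2 + 2 / sqrt (real d) * Im (lam j)\<bar>
             \<le> 2 ^ n * c0 / sqrt (real d) ^ n))
   \<and>
    ((d mod 4 = 1 \<or> d mod 4 = 2) \<longrightarrow>
       (\<forall>x1 x2 y1 y2 :: int.
          X = of_int x1 + of_int x2 * (\<i> * complex_of_real (sqrt (real d))) \<and>
          Y = of_int y1 + of_int y2 * (\<i> * complex_of_real (sqrt (real d))) \<longrightarrow>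
          \<bar>\<Prod>j=1..n. real_of_int x1 - alpha j * real_of_int y1 + Re (lam j)\<bar> \<le> c0 \<and>
          \<bar>\<Prod>j=1..n. real_of_int x2 - alpha j * real_of_int y2 + 1 / sqrt (real d) * Im (lam j)\<bar>
             \<le> c0 / sqrt (real d) ^ n))"
proof -
  let ?s = "sqrt (real d)"
  let ?z = "\<lambda>j. X - of_real (alpha j) * Y + lam j"
  have sp: "?s > 0" using assms(1) by simp
  have N: "norm (\<Prod>j=1..n. ?z j) \<le> c0" using assms(9) by simp
  have cn: "card {1..n} = n" by simp
  have A: "\<bar>\<Prod>j=1..n. real_of_int (2*x1 + x2) - alpha j * real_of_int (2*y1 + y2) + 2 * Re (lam j)\<bar>
             \<le> 2 ^ n * c0 \<and>
          \<bar>\<Prod>j=1..n. real_of_int x2 - alpha j * real_of_int y2 + 2 / ?s * Im (lam j)\<bar>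
             \<le> 2 ^ n * c0 / ?s ^ n"
    if hX: "X = of_int x1 + of_int x2 * ((1 + \<i> * complex_of_real ?s) / 2)"
      and hY: "Y = of_int y1 + of_int y2 * ((1 + \<i> * complex_of_real ?s) / 2)" for x1 x2 y1 y2 :: int
  proof
    have "\<bar>\<Prod>j=1..n. real_of_int (2*x1 + x2) - alpha j * real_of_int (2*y1 + y2) + 2 * Re (lam j)\<bar>
        \<le> 2 ^ card {1..n} * norm (\<Prod>j=1..n. ?z j)"
    proof (rule prod_bound_aux)
      fix j
      have "real_of_int (2*x1 + x2) - alpha j * real_of_int (2*y1 + y2) + 2 * Re (lam j) = 2 * Re (?z j)"
        using hX hY by (simp add: algebra_simps)
      then show "\<bar>real_of_int (2*x1 + x2) - alpha j * real_of_int (2*y1 + y2) + 2 * Re (lam j)\<bar> \<le> 2 * norm (?z j)"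
        using abs_Re_le_cmod[of "?z j"] by simp
    qed simp
    also have "\<dots> \<le> 2 ^ n * c0" using N cn by simp
    finally show "\<bar>\<Prod>j=1..n. real_of_int (2*x1 + x2) - alpha j * real_of_int (2*y1 + y2) + 2 * Re (lam j)\<bar>
             \<le> 2 ^ n * c0" .
  next
    have "\<bar>\<Prod>j=1..n. real_of_int x2 - alpha j * real_of_int y2 + 2 / ?s * Im (lam j)\<bar>
        \<le> (2 / ?s) ^ card {1..n} * norm (\<Prod>j=1..n. ?z j)"
    proof (rule prod_bound_aux)
      fix j
      have "Im (?z j) = real_of_int x2 * ?s / 2 - alpha j * (real_of_int y2 * ?s / 2) + Im (lam j)"
        using hX hY by (simp add: algebra_simps)
      then have "real_of_int x2 - alpha j * real_of_int y2 + 2 / ?s * Im (lam j) = 2 / ?s * Im (?z j)" (is ?eq)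
        using sp by (simp add: field_simps)
      note eq = this
      show "\<bar>real_of_int x2 - alpha j * real_of_int y2 + 2 / ?s * Im (lam j)\<bar> \<le> 2 / ?s * norm (?z j)"
      proof -
        have "\<bar>2 / ?s * Im (?z j)\<bar> = 2 / ?s * \<bar>Im (?z j)\<bar>"
          using sp abs_mult[of "2 / ?s" "Im (?z j)"] abs_of_pos[of "2 / ?s"] by simp
        also have "\<dots> \<le> 2 / ?s * norm (?z j)"
          using abs_Im_le_cmod[of "?z j"] sp by (intro mult_left_mono) auto
        finally show ?thesis using eq by simp
      qed
    qed (use sp in simp)
    also have "\<dots> \<le> (2 / ?s) ^ n * c0" using N cn sp by (simp add: mult_left_mono)
    also have "\<dots> = 2 ^ n * c0 / ?s ^ n" by (simp add: power_divide)
    finally show "\<bar>\<Prod>j=1..n. real_of_int x2 - alpha j * real_of_int y2 + 2 / ?s * Im (lam j)\<bar>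
             \<le> 2 ^ n * c0 / ?s ^ n" .
  qed
  have B: "\<bar>\<Prod>j=1..n. real_of_int x1 - alpha j * real_of_int y1 + Re (lam j)\<bar> \<le> c0 \<and>
          \<bar>\<Prod>j=1..n. real_of_int x2 - alpha j * real_of_int y2 + 1 / ?s * Im (lam j)\<bar>
             \<le> c0 / ?s ^ n"
    if hX: "X = of_int x1 + of_int x2 * (\<i> * complex_of_real ?s)"
      and hY: "Y = of_int y1 + of_int y2 * (\<i> * complex_of_real ?s)" for x1 x2 y1 y2 :: int
  proof
    have "\<bar>\<Prod>j=1..n. real_of_int x1 - alpha j * real_of_int y1 + Re (lam j)\<bar>
        \<le> 1 ^ card {1..n} * norm (\<Prod>j=1..n. ?z j)"
    proof (rule prod_bound_aux)
      fix j
      have "real_of_int x1 - alpha j * real_of_int y1 + Re (lam j) = Re (?z j)"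
        using hX hY by (simp add: algebra_simps)
      then show "\<bar>real_of_int x1 - alpha j * real_of_int y1 + Re (lam j)\<bar> \<le> 1 * norm (?z j)"
        using abs_Re_le_cmod[of "?z j"] by simp
    qed simp
    also have "\<dots> \<le> c0" using N by simp
    finally show "\<bar>\<Prod>j=1..n. real_of_int x1 - alpha j * real_of_int y1 + Re (lam j)\<bar> \<le> c0" .
  next
    have "\<bar>\<Prod>j=1..n. real_of_int x2 - alpha j * real_of_int y2 + 1 / ?s * Im (lam j)\<bar>
        \<le> (1 / ?s) ^ card {1..n} * norm (\<Prod>j=1..n. ?z j)"
    proof (rule prod_bound_aux)
      fix j
      have "Im (?z j) = real_of_int x2 * ?s - alpha j * (real_of_int y2 * ?s) + Im (lam j)"
        using hX hY by (simp add: algebra_simps)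
      then have "real_of_int x2 - alpha j * real_of_int y2 + 1 / ?s * Im (lam j) = 1 / ?s * Im (?z j)" (is ?eq)
        using sp by (simp add: field_simps)
      note eq = this
      show "\<bar>real_of_int x2 - alpha j * real_of_int y2 + 1 / ?s * Im (lam j)\<bar> \<le> 1 / ?s * norm (?z j)"
      proof -
        have "\<bar>1 / ?s * Im (?z j)\<bar> = 1 / ?s * \<bar>Im (?z j)\<bar>"
          using sp abs_mult[of "1 / ?s" "Im (?z j)"] abs_of_pos[of "1 / ?s"] by simp
        also have "\<dots> \<le> 1 / ?s * norm (?z j)"
          using abs_Im_le_cmod[of "?z j"] sp by (intro mult_left_mono) auto
        finally show ?thesis using eq by simp
      qed
    qed (use sp in simp)
    also have "\<dots> \<le> (1 / ?s) ^ n * c0" using N cn sp by (simp add: mult_left_mono)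
    also have "\<dots> = c0 / ?s ^ n" by (simp add: power_divide)
    finally show "\<bar>\<Prod>j=1..n. real_of_int x2 - alpha j * real_of_int y2 + 1 / ?s * Im (lam j)\<bar>
             \<le> c0 / ?s ^ n" .
  qed
  show ?thesis using A B by blast
qed

end
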